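(* If $G$ is a circulant graph, then $\operatorname{stww}(G)\leq 3\Delta(G)+1$.
   Context: All graphs are finite and simple. A graph $G$ is circulant if there is an automorphism $\varphi$ of $G$ such that for any two vertices $v,w$ there is $j\in\mathbb{N}$ with $\varphi^j(v)=w$. $\Delta(G)$ is the maximum degree. A trigraph is a graph whose edges are each colored red or black; a graph is viewed as a trigraph with all edges black. The red degree of a vertex is the number of red edges incident to it. For a partition $\mathcal{P}$ of $V(G)$, the quotient trigraph $G/\mathcal{P}$ has vertex set $\mathcal{P}$; two distinct parts $U,W$ are joined by a black edge if every pair $\{u,w\}$ with $u\in U,w\in W$ is a black edge of $G$, are non-adjacent if no such pair is an edge of $G$, and are joined by a red edge otherwise. A contraction sequence of an $n$-vertex trigraph $G$ is a sequence $\mathcal{P}_n,\dots,\mathcal{P}_1$ of partitions of $V(G)$ where $\mathcal{P}_n$ is the partition into singletons and each $\mathcal{P}_i$ arises from $\mathcal{P}_{i+1}$ by merging two parts; its width is the maximum red degree over all $G/\mathcal{P}_i$, and the twin-width $\operatorname{tww}(G)$ is the minimum width of a contraction sequence. The sparse twin-width is $\operatorname{stww}(G)\coloneqq\operatorname{tww}(G_{\mathrm{red}})$, where $G_{\mathrm{red}}$ is the trigraph obtained from $G$ by coloring all edges red. *)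

theory Defs
  imports Main
begin

definition simple_graph :: "'a set \<Rightarrow> 'a set set \<Rightarrow> bool" where
  "simple_graph V E \<longleftrightarrow> finite V \<and>
     (\<forall>e\<in>E. \<exists>u v. u \<noteq> v \<and> u \<in> V \<and> v \<in> V \<and> e = {u, v})"

definition degree :: "'a set \<Rightarrow> 'a set set \<Rightarrow> 'a \<Rightarrow> nat" where
  "degree V E v = card {w \<in> V. {v, w} \<in> E}"

definition max_degree :: "'a set \<Rightarrow> 'a set set \<Rightarrow> nat" where
  "max_degree V E = Max (insert 0 (degree V E ` V))"

definition automorphism :: "'a set \<Rightarrow> 'a set set \<Rightarrow> ('a \<Rightarrow> 'a) \<Rightarrow> bool" where
  "automorphism V E \<phi> \<longleftrightarrow> bij_betw \<phi> V V \<and>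
     (\<forall>u\<in>V. \<forall>v\<in>V. {u, v} \<in> E \<longleftrightarrow> {\<phi> u, \<phi> v} \<in> E)"

definition circulant :: "'a set \<Rightarrow> 'a set set \<Rightarrow> bool" where
  "circulant V E \<longleftrightarrow> (\<exists>\<phi>. automorphism V E \<phi> \<and>
     (\<forall>v\<in>V. \<forall>w\<in>V. \<exists>j::nat. (\<phi> ^^ j) v = w))"

text \<open>A trigraph is given by a vertex set V, black edges B and red edges R
  (disjoint sets of 2-element subsets of V).\<close>

definition quot_black :: "'a set set \<Rightarrow> 'a set \<Rightarrow> 'a set \<Rightarrow> bool" where
  "quot_black B U W \<longleftrightarrow> (\<forall>u\<in>U. \<forall>w\<in>W. {u, w} \<in> B)"

definition quot_nonadj :: "'a set set \<Rightarrow> 'a set set \<Rightarrow> 'a set \<Rightarrow> 'a set \<Rightarrow> bool" where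
  "quot_nonadj B R U W \<longleftrightarrow> (\<forall>u\<in>U. \<forall>w\<in>W. {u, w} \<notin> B \<and> {u, w} \<notin> R)"

definition quot_red :: "'a set set \<Rightarrow> 'a set set \<Rightarrow> 'a set \<Rightarrow> 'a set \<Rightarrow> bool" where
  "quot_red B R U W \<longleftrightarrow> \<not> quot_black B U W \<and> \<not> quot_nonadj B R U W"

definition quot_red_degree ::
  "'a set set \<Rightarrow> 'a set set \<Rightarrow> 'a set set \<Rightarrow> 'a set \<Rightarrow> nat" where
  "quot_red_degree B R P U = card {W \<in> P. W \<noteq> U \<and> quot_red B R U W}"

definition max_quot_red_degree :: "'a set set \<Rightarrow> 'a set set \<Rightarrow> 'a set set \<Rightarrow> nat" where
  "max_quot_red_degree B R P = Max (insert 0 (quot_red_degree B R P ` P))"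

text \<open>A contraction sequence P_n, ..., P_1 (n = |V|), represented as a function
  on indices 1..n.\<close>
definition contraction_sequence :: "'a set \<Rightarrow> (nat \<Rightarrow> 'a set set) \<Rightarrow> bool" where
  "contraction_sequence V P \<longleftrightarrow>
     P (card V) = (\<lambda>v. {v}) ` V \<and>
     (\<forall>i. 1 \<le> i \<and> i < card V \<longrightarrow>
        (\<exists>X\<in>P (Suc i). \<exists>Y\<in>P (Suc i). X \<noteq> Y \<and>
            P i = (P (Suc i) - {X, Y}) \<union> {X \<union> Y}))"

definition cs_width :: "'a set \<Rightarrow> 'a set set \<Rightarrow> 'a set set \<Rightarrow> (nat \<Rightarrow> 'a set set) \<Rightarrow> nat" where
  "cs_width V B R P = Max (insert 0 ((\<lambda>i. max_quot_red_degree B R (P i)) ` {1..card V}))"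

definition tww :: "'a set \<Rightarrow> 'a set set \<Rightarrow> 'a set set \<Rightarrow> nat" where
  "tww V B R = (LEAST d. \<exists>P. contraction_sequence V P \<and> cs_width V B R P = d)"

definition stww :: "'a set \<Rightarrow> 'a set set \<Rightarrow> nat" where
  "stww V E = tww V {} E"

end

theory Submission
  imports Defs
begin

definition cls :: "nat \<Rightarrow> nat set \<Rightarrow> nat \<Rightarrow> nat set" where
  "cls n C x = {y. y < n \<and> (\<forall>c\<in>C. c \<le> x \<longleftrightarrow> c \<le> y)}"

definition parts :: "nat \<Rightarrow> nat set \<Rightarrow> nat set set" where
  "parts n C = cls n C ` {..<n}"

definition goodcuts :: "nat \<Rightarrow> nat \<Rightarrow> nat set \<Rightarrow> bool" where
  "goodcuts n r C \<longleftrightarrow> (\<forall>x\<in>C. 2^r dvd x) \<and>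
     (\<forall>y. 0 < y \<and> y < n \<and> 2^(Suc r) dvd y \<longrightarrow> y \<in> C)"

lemma cls_sub: "cls n C x \<subseteq> {..<n}"
  by (auto simp: cls_def)

lemma cls_self: "x < n \<Longrightarrow> x \<in> cls n C x"
  by (auto simp: cls_def)

lemma cls_eq: "y \<in> cls n C x \<Longrightarrow> cls n C y = cls n C x"
  by (auto simp: cls_def)

lemma parts_mem_eq: "B \<in> parts n C \<Longrightarrow> z \<in> B \<Longrightarrow> B = cls n C z"
  by (auto simp: parts_def dest: cls_eq)

lemma finite_parts: "finite (parts n C)"
  by (simp add: parts_def)

lemma window:
  assumes g: "goodcuts n r C" and x: "x < n"
  shows "cls n C x \<subseteq> {x div 2^(Suc r) * 2^(Suc r) ..< x div 2^(Suc r) * 2^(Suc r) + 2^(Suc r)}"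
proof
  fix y assume y: "y \<in> cls n C x"
  define m :: nat where "m = 2^(Suc r)"
  define q where "q = x div m * m"
  have mpos: "m > 0" by (simp add: m_def)
  have qx: "q \<le> x" by (simp add: q_def)
  have xq: "x < q + m" unfolding q_def using mpos
    by (metis add.commute div_mult_mod_eq mod_less_divisor add_less_cancel_left)
  have dq: "m dvd q" by (simp add: q_def)
  have yn: "y < n" and yc: "\<And>c. c \<in> C \<Longrightarrow> c \<le> x \<longleftrightarrow> c \<le> y" using y by (auto simp: cls_def)
  have "\<not> y < q"
  proof
    assume "y < q"
    then have "q \<in> C" using g dq qx x unfolding goodcuts_def m_def by auto
    then show False using yc[of q] qx \<open>y < q\<close> by auto
  qed
  moreover have "\<not> y \<ge> q + m"
  proof
    assume "y \<ge> q + m"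
    then have "q + m \<in> C" using g dq yn unfolding goodcuts_def m_def by auto
    then show False using yc[of "q+m"] xq \<open>y \<ge> q + m\<close> by auto
  qed
  ultimately show "y \<in> {x div 2^(Suc r) * 2^(Suc r) ..< x div 2^(Suc r) * 2^(Suc r) + 2^(Suc r)}"
    by (simp add: q_def m_def)
qed

lemma aligned_le:
  fixes l c z j :: nat
  assumes "l dvd c" "l dvd z" "c \<le> z + j" "j < l"
  shows "c \<le> z"
proof -
  obtain a b where ab: "c = l * a" "z = l * b" using assms(1,2) by (auto elim!: dvdE)
  have "l * a < l * (b + 1)" using assms(3,4) ab by simp
  then have "a < b + 1" by (metis mult_less_cancel1)
  then show ?thesis using ab by simp
qed

lemma aligned:
  assumes g: "goodcuts n r C" and z: "z < n" and zc: "z = 0 \<or> z \<in> C"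
    and nb: "n - 1 \<notin> cls n C z" and j: "j < 2^r"
  shows "z + j < n \<and> z + j \<in> cls n C z"
proof -
  have dz: "2^r dvd z" using zc g by (auto simp: goodcuts_def)
  have key: "z + k \<in> cls n C z" if "k < 2^r" "z + k < n" for k
  proof -
    have "c \<le> z \<longleftrightarrow> c \<le> z + k" if "c \<in> C" for c
      using aligned_le[of "2^r" c z k] g that dz \<open>k < 2^r\<close> by (auto simp: goodcuts_def)
    then show ?thesis using that by (auto simp: cls_def)
  qed
  have "z + j < n"
  proof (rule ccontr)
    assume "\<not> z + j < n"
    then have "n - 1 - z < 2^r" "z + (n - 1 - z) < n" using j z by auto
    from key[OF this] have "n - 1 \<in> cls n C z" using z by simp
    then show False using nb by simp
  qed
  then show ?thesis using key j by simp
qed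

lemma entry:
  assumes B: "B = cls n C y" and p: "p < n" and w: "(p + 1) mod n \<in> B" and pB: "p \<notin> B"
    and C: "C \<subseteq> {1..<n}"
  shows "(p + 1) mod n = 0 \<or> (p + 1) mod n \<in> C"
proof (cases "p + 1 = n")
  case True then show ?thesis by simp
next
  case False
  then have e: "(p + 1) mod n = p + 1" "p + 1 < n" using p by auto
  have "B = cls n C (p+1)" using B w e cls_eq by metis
  then have "p \<notin> cls n C (p + 1)" using pB by simp
  then obtain c where "c \<in> C" "\<not> (c \<le> p + 1 \<longleftrightarrow> c \<le> p)" using p by (auto simp: cls_def)
  then have "c = p + 1" by auto
  then show ?thesis using e \<open>c \<in> C\<close> by simp
qed

lemma card3:
  fixes T :: "nat set"
  assumes T: "T \<subseteq> {..<2*l}" and sep: "\<And>t t'. t \<in> T \<Longrightarrow> t' \<in> T \<Longrightarrow> 0 < t \<Longrightarrow> t < t' \<Longrightarrow> t + l \<le> t'"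
  shows "card T \<le> 3"
proof (rule ccontr)
  assume "\<not> card T \<le> 3"
  moreover have fin: "finite T" using T finite_subset by blast
  moreover have "card T \<le> card (T - {0}) + 1"
    using fin by (cases "0 \<in> T") (auto simp: card_Diff_singleton_if card_gt_0_iff)
  ultimately have "card (T - {0}) \<ge> 3" by linarith
  then obtain U where U: "U \<subseteq> T - {0}" "card U = 3" by (meson obtain_subset_with_card_n)
  then obtain a b c where abc: "a \<in> T - {0}" "b \<in> T - {0}" "c \<in> T - {0}" "a \<noteq> b" "a \<noteq> c" "b \<noteq> c"
    unfolding card_3_iff by auto
  have s: "t + l \<le> t' \<or> t' + l \<le> t" if "t \<in> T - {0}" "t' \<in> T - {0}" "t \<noteq> t'" for t t'
    using sep[of t t'] sep[of t' t] that by (cases "t < t'") auto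
  have "a < 2*l" "b < 2*l" "c < 2*l" using abc T by auto
  then show False using s[OF abc(1,2,4)] s[OF abc(1,3,5)] s[OF abc(2,3,6)] abc by auto
qed


lemma walk:
  assumes n: "n > 0" and g: "goodcuts n r C" and C: "C \<subseteq> {1..<n}"
  shows "card {B \<in> parts n C. n - 1 \<notin> B \<and> (\<exists>t<2*2^r. (p + t) mod n \<in> B)} \<le> 3"
proof -
  define M where "M = {B \<in> parts n C. n - 1 \<notin> B \<and> (\<exists>t<2*2^r. (p + t) mod n \<in> B)}"
  define w where "w t = (p + t) mod n" for t
  define \<tau> where "\<tau> B = (LEAST t. w t \<in> B)" for B
  have wn: "w t < n" for t using n by (simp add: w_def)
  have tM: "\<tau> B < 2*2^r" "w (\<tau> B) \<in> B" "\<And>t. t < \<tau> B \<Longrightarrow> w t \<notin> B" if BM: "B \<in> M" for B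
  proof -
    obtain t where t: "t < 2*2^r" "w t \<in> B" using BM unfolding M_def w_def by blast
    show "\<tau> B < 2*2^r" using Least_le[of "\<lambda>t. w t \<in> B" t] t by (simp add: \<tau>_def)
    show "w (\<tau> B) \<in> B" using LeastI[of "\<lambda>t. w t \<in> B" t] t by (simp add: \<tau>_def)
    show "\<And>t. t < \<tau> B \<Longrightarrow> w t \<notin> B" using not_less_Least unfolding \<tau>_def by blast
  qed
  have inj: "inj_on \<tau> M"
  proof
    fix B B' assume BB: "B \<in> M" "B' \<in> M" "\<tau> B = \<tau> B'"
    then have "B = cls n C (w (\<tau> B))" "B' = cls n C (w (\<tau> B))"
      using tM parts_mem_eq unfolding M_def by (metis (no_types, lifting) mem_Collect_eq)+
    then show "B = B'" by simp
  qed
  have sep: "\<tau> B + 2^r \<le> \<tau> B'" if BB: "B \<in> M" "B' \<in> M" "0 < \<tau> B" "\<tau> B < \<tau> B'" for B B'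
  proof (rule ccontr)
    assume "\<not> \<tau> B + 2^r \<le> \<tau> B'"
    define j where "j = \<tau> B' - \<tau> B"
    have j: "j < 2^r" "\<tau> B' = \<tau> B + j" using BB \<open>\<not> \<tau> B + 2^r \<le> \<tau> B'\<close> by (auto simp: j_def)
    define z where "z = w (\<tau> B)"
    have Bp: "B \<in> parts n C" "n - 1 \<notin> B" using BB by (auto simp: M_def)
    have Bz: "B = cls n C z" using parts_mem_eq Bp tM BB unfolding z_def by blast
    have wprev: "w (\<tau> B) = (w (\<tau> B - 1) + 1) mod n"
      using BB(3) unfolding w_def by (simp add: mod_Suc_eq)
    have "w (\<tau> B - 1) \<notin> B" using tM(3)[OF BB(1)] BB(3) by simp
    then have zc: "z = 0 \<or> z \<in> C"
      using entry[OF Bz wn[of "\<tau> B - 1"] _ _ C] wprev tM(2)[OF BB(1)] unfolding z_def by simp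
    have al: "z + j < n \<and> z + j \<in> cls n C z"
      using aligned[OF g _ zc _ j(1)] wn Bz Bp unfolding z_def by auto
    have "w (\<tau> B') = (z + j) mod n" unfolding z_def w_def j(2) by (simp add: mod_add_left_eq add.assoc)
    then have "w (\<tau> B') = z + j" using al by simp
    then have "w (\<tau> B') \<in> B" using al Bz by simp
    moreover have "B' \<in> parts n C" using BB by (auto simp: M_def)
    ultimately have "B' = B" using tM(2)[OF BB(2)] parts_mem_eq Bp by metis
    then show False using BB by simp
  qed
  have "card (\<tau> ` M) \<le> 3"
    apply (rule card3[of _ "2^r"])
    using tM sep by auto
  then show ?thesis using card_image[OF inj] unfolding M_def by simp
qed

lemma idx_bound:
  assumes n: "n > 0" and g: "goodcuts n r C" and C: "C \<subseteq> {1..<n}" and S: "S \<subseteq> {..<n}"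
    and x0: "x0 < n"
  shows "card {B \<in> parts n C. \<exists>x\<in>cls n C x0. \<exists>y\<in>B. (y + n - x) mod n \<in> S} \<le> 3 * card S + 1"
proof -
  define m :: nat where "m = 2*2^r"
  define q where "q = x0 div m * m"
  define M where "M p = {B \<in> parts n C. n - 1 \<notin> B \<and> (\<exists>t<2*2^r. (p + t) mod n \<in> B)}" for p
  have win: "cls n C x0 \<subseteq> {q..<q+m}" using window[OF g x0] by (simp add: q_def m_def)
  have sub: "{B \<in> parts n C. \<exists>x\<in>cls n C x0. \<exists>y\<in>B. (y + n - x) mod n \<in> S}
      \<subseteq> insert (cls n C (n - 1)) (\<Union>s\<in>S. M (q + s))"
  proof
    fix B assume "B \<in> {B \<in> parts n C. \<exists>x\<in>cls n C x0. \<exists>y\<in>B. (y + n - x) mod n \<in> S}"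
    then obtain x y where B: "B \<in> parts n C" and x: "x \<in> cls n C x0" and y: "y \<in> B"
      and d: "(y + n - x) mod n \<in> S" by blast
    define d where "d = (y + n - x) mod n"
    have xn: "x < n" using x cls_sub by blast
    have yn: "y < n" using B y cls_sub unfolding parts_def by blast
    have xq: "q \<le> x" "x < q + m" using win x by auto
    have "(q + d + (x - q)) mod n = (x + d) mod n" using xq by (simp add: add.commute)
    also have "\<dots> = (x + (y + n - x)) mod n" unfolding d_def by (simp add: mod_add_right_eq)
    also have "\<dots> = y" using xn yn by simp
    finally have wy: "(q + d + (x - q)) mod n = y" .
    show "B \<in> insert (cls n C (n - 1)) (\<Union>s\<in>S. M (q + s))"
    proof (cases "n - 1 \<in> B")
      case True then show ?thesis using parts_mem_eq[OF B] by blast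
    next
      case False
      have "B \<in> M (q + d)" unfolding M_def using False B wy y xq m_def
        by (auto intro!: exI[of _ "x - q"])
      then show ?thesis using d d_def by blast
    qed
  qed
  have finS: "finite S" using S finite_subset by blast
  have "card (insert (cls n C (n - 1)) (\<Union>s\<in>S. M (q + s))) \<le> card (\<Union>s\<in>S. M (q + s)) + 1"
    by (simp add: card_insert_le_m1 card_insert_if)
  also have "card (\<Union>s\<in>S. M (q + s)) \<le> (\<Sum>s\<in>S. card (M (q + s)))"
    using finS by (rule card_UN_le)
  also have "\<dots> \<le> (\<Sum>s\<in>S. 3)"
    apply (rule sum_mono) using walk[OF n g C] unfolding M_def by blast
  also have "\<dots> = 3 * card S" by simp
  finally have "card (insert (cls n C (n - 1)) (\<Union>s\<in>S. M (q + s))) \<le> 3 * card S + 1" by simp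
  moreover have "finite (insert (cls n C (n - 1)) (\<Union>s\<in>S. M (q + s)))"
    using finS finite_parts unfolding M_def by auto
  ultimately show ?thesis using card_mono[OF _ sub] by (meson le_trans)
qed


lemma merge_in:
  assumes c: "c \<in> C" and C: "C \<subseteq> {1..<n}" and x: "x \<in> cls n C (c - 1) \<union> cls n C c"
  shows "cls n (C - {c}) x = cls n C (c - 1) \<union> cls n C c"
proof -
  have c1: "1 \<le> c" "c < n" using c C by auto
  have other: "\<And>c'. c' \<in> C \<Longrightarrow> c' \<noteq> c \<Longrightarrow> (c' \<le> c - 1 \<longleftrightarrow> c' \<le> c)" using c1 by auto
  have xn: "x < n" and xc: "\<And>c'. c' \<in> C \<Longrightarrow> c' \<noteq> c \<Longrightarrow> (c' \<le> x \<longleftrightarrow> c' \<le> c)"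
    using x other by (auto simp: cls_def)
  show ?thesis
  proof (intro set_eqI iffI)
    fix y assume "y \<in> cls n (C - {c}) x"
    then have yn: "y < n" and yc: "\<And>c'. c' \<in> C \<Longrightarrow> c' \<noteq> c \<Longrightarrow> (c' \<le> y \<longleftrightarrow> c' \<le> c)"
      using xc by (auto simp: cls_def)
    show "y \<in> cls n C (c - 1) \<union> cls n C c"
    proof (cases "c \<le> y")
      case True
      then have "y \<in> cls n C c" using yn yc by (auto simp: cls_def)
      then show ?thesis by blast
    next
      case False
      have "c' \<le> c - 1 \<longleftrightarrow> c' \<le> y" if "c' \<in> C" for c'
      proof (cases "c' = c")
        case True then show ?thesis using False c1 by simp
      next
        case ne: False then show ?thesis using yc[OF that ne] other[OF that ne] by simp
      qed
      then have "y \<in> cls n C (c - 1)" using yn unfolding cls_def by blast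
      then show ?thesis by blast
    qed
  next
    fix y assume "y \<in> cls n C (c - 1) \<union> cls n C c"
    then have yn: "y < n" and yc: "\<And>c'. c' \<in> C \<Longrightarrow> c' \<noteq> c \<Longrightarrow> (c' \<le> y \<longleftrightarrow> c' \<le> c)"
      using other by (auto simp: cls_def)
    show "y \<in> cls n (C - {c}) x" using yn yc xc by (auto simp: cls_def)
  qed
qed

lemma merge_out:
  assumes c: "c \<in> C" and C: "C \<subseteq> {1..<n}" and x: "x < n" "x \<notin> cls n C (c - 1) \<union> cls n C c"
  shows "cls n (C - {c}) x = cls n C x"
proof (intro set_eqI iffI)
  fix y assume y: "y \<in> cls n (C - {c}) x"
  have c1: "1 \<le> c" "c < n" using c C by auto
  have "c \<le> x \<longleftrightarrow> c \<le> y"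
  proof (cases "c \<le> x")
    case True
    from x(2) have "x \<notin> cls n C c" by blast
    then obtain c' where "c' \<in> C" "\<not> (c' \<le> c \<longleftrightarrow> c' \<le> x)" using x(1) by (auto simp: cls_def)
    then have "c < c'" "c' \<le> x" "c' \<in> C" using True by auto
    then have "c' \<in> C - {c}" by simp
    then have "c' \<le> y" using y \<open>c' \<le> x\<close> unfolding cls_def by blast
    then show ?thesis using True \<open>c < c'\<close> by simp
  next
    case False
    from x(2) have "x \<notin> cls n C (c - 1)" by blast
    then obtain c' where "c' \<in> C" "\<not> (c' \<le> c - 1 \<longleftrightarrow> c' \<le> x)" using x(1) by (auto simp: cls_def)
    then have "x < c'" "c' < c" "c' \<in> C" using False c1 by auto
    then have "c' \<in> C - {c}" by simp
    then have "c' \<le> x \<longleftrightarrow> c' \<le> y" using y unfolding cls_def by blast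
    then have "\<not> c' \<le> y" using \<open>x < c'\<close> by simp
    then show ?thesis using False \<open>c' < c\<close> by simp
  qed
  then show "y \<in> cls n C x" using y by (auto simp: cls_def)
next
  fix y assume "y \<in> cls n C x" then show "y \<in> cls n (C - {c}) x" by (auto simp: cls_def)
qed

lemma merge:
  assumes c: "c \<in> C" and C: "C \<subseteq> {1..<n}"
  shows "cls n C (c - 1) \<in> parts n C \<and> cls n C c \<in> parts n C \<and> cls n C (c - 1) \<noteq> cls n C c \<and>
    parts n (C - {c}) = (parts n C - {cls n C (c - 1), cls n C c}) \<union> {cls n C (c - 1) \<union> cls n C c}"
proof -
  have c1: "1 \<le> c" "c < n" using c C by auto
  let ?X = "cls n C (c - 1)" and ?Y = "cls n C c"
  have XY: "?X \<in> parts n C" "?Y \<in> parts n C" using c1 by (auto simp: parts_def)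
  have ne: "?X \<noteq> ?Y"
  proof
    assume "?X = ?Y"
    then have "c - 1 \<in> ?Y" using cls_self[of "c - 1" n C] c1 by simp
    then show False using c c1 by (auto simp: cls_def)
  qed
  have "parts n (C - {c}) = (parts n C - {?X, ?Y}) \<union> {?X \<union> ?Y}"
  proof (intro set_eqI iffI)
    fix Z assume "Z \<in> parts n (C - {c})"
    then obtain x where x: "x < n" "Z = cls n (C - {c}) x" by (auto simp: parts_def)
    show "Z \<in> (parts n C - {?X, ?Y}) \<union> {?X \<union> ?Y}"
    proof (cases "x \<in> ?X \<union> ?Y")
      case True then show ?thesis using merge_in[OF c C True] x by simp
    next
      case False
      then have "cls n C x \<noteq> ?X" "cls n C x \<noteq> ?Y" using cls_self[OF x(1)] by auto
      then show ?thesis using merge_out[OF c C x(1) False] x by (auto simp: parts_def)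
    qed
  next
    fix Z assume Z: "Z \<in> (parts n C - {?X, ?Y}) \<union> {?X \<union> ?Y}"
    show "Z \<in> parts n (C - {c})"
    proof (cases "Z = ?X \<union> ?Y")
      case True
      then have "Z = cls n (C - {c}) c" using merge_in[OF c C, of c] cls_self[OF c1(2)] by auto
      then show ?thesis using c1 by (auto simp: parts_def)
    next
      case False
      then obtain x where x: "x < n" "Z = cls n C x" "Z \<noteq> ?X" "Z \<noteq> ?Y" using Z by (auto simp: parts_def)
      have "x \<notin> ?X \<union> ?Y" using x cls_eq by blast
      then have "Z = cls n (C - {c}) x" using merge_out[OF c C x(1)] x by simp
      then show ?thesis using x by (auto simp: parts_def)
    qed
  qed
  then show ?thesis using XY ne by blast
qed

lemma cls_full: "x < n \<Longrightarrow> cls n {1..<n} x = {x}"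
proof (intro set_eqI iffI)
  fix y assume "x < n" "y \<in> cls n {1..<n} x"
  then have yn: "y < n" and h: "\<And>c. 1 \<le> c \<Longrightarrow> c < n \<Longrightarrow> c \<le> x \<longleftrightarrow> c \<le> y" by (auto simp: cls_def)
  show "y \<in> {x}"
  proof (rule ccontr)
    assume "y \<notin> {x}"
    then have "y \<noteq> x" by simp
    then show False using h[of "max x y"] \<open>x < n\<close> yn by (cases "x < y") auto
  qed
qed (auto simp: cls_def)

lemma step:
  assumes "goodcuts n r C" "C \<noteq> {}" "C \<subseteq> {1..<n}"
  shows "\<exists>x\<in>C. \<exists>r'. goodcuts n r' (C - {x})"
  using assms
proof (induction "n - 2^r" arbitrary: r rule: less_induct)
  case less
  show ?case
  proof (cases "\<exists>x\<in>C. \<not> 2^(Suc r) dvd x")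
    case True
    then obtain x where x: "x \<in> C" "\<not> 2^(Suc r) dvd x" by blast
    have "goodcuts n r (C - {x})" using less.prems(1) x unfolding goodcuts_def by auto
    then show ?thesis using x by blast
  next
    case False
    have g: "goodcuts n (Suc r) C" using False less.prems(1) unfolding goodcuts_def
      by (metis dvd_trans le_imp_power_dvd le_add2 plus_1_eq_Suc)
    obtain x0 where x0: "x0 \<in> C" using less.prems(2) by blast
    have "2^(Suc r) dvd x0" "0 < x0" "x0 < n" using False x0 less.prems(3) by auto
    then have "2^(Suc r) \<le> x0" by (simp add: dvd_imp_le)
    moreover have "(0::nat) < 2^r" by simp
    ultimately have "n - 2^(Suc r) < n - 2^r" using \<open>x0 < n\<close> diff_less_mono2[of "2^r" "2^Suc r" n] by simp
    then show ?thesis using less.hyps g less.prems(2,3) by blast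
  qed
qed

definition nxt :: "nat \<Rightarrow> nat set \<Rightarrow> nat set" where
  "nxt n C = (if C = {} then {} else C - {SOME x. x \<in> C \<and> (\<exists>r. goodcuts n r (C - {x}))})"

definition Dseq :: "nat \<Rightarrow> nat \<Rightarrow> nat set" where
  "Dseq n k = (nxt n ^^ k) {1..<n}"

lemma Dseq_step:
  assumes IH: "(\<exists>r. goodcuts n r (Dseq n k)) \<and> Dseq n k \<subseteq> {1..<n} \<and> card (Dseq n k) = n - 1 - k"
  shows "(\<exists>r. goodcuts n r (Dseq n (Suc k))) \<and> Dseq n (Suc k) \<subseteq> {1..<n} \<and> card (Dseq n (Suc k)) = n - 1 - Suc k
       \<and> (Dseq n k \<noteq> {} \<longrightarrow> (\<exists>x\<in>Dseq n k. Dseq n (Suc k) = Dseq n k - {x}))"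
proof -
    have DS: "Dseq n (Suc k) = nxt n (Dseq n k)" by (simp add: Dseq_def)
    show ?thesis
    proof (cases "Dseq n k = {}")
      case True
      then show ?thesis using IH DS by (simp add: nxt_def)
    next
      case False
      obtain r where r: "goodcuts n r (Dseq n k)" using IH by blast
      have ex: "\<exists>x. x \<in> Dseq n k \<and> (\<exists>r. goodcuts n r (Dseq n k - {x}))"
        using step[OF r False] IH by blast
      define x where "x = (SOME x. x \<in> Dseq n k \<and> (\<exists>r. goodcuts n r (Dseq n k - {x})))"
      have x: "x \<in> Dseq n k" "\<exists>r. goodcuts n r (Dseq n k - {x})"
        using someI_ex[OF ex] unfolding x_def by blast+
      have eq: "Dseq n (Suc k) = Dseq n k - {x}" using DS False by (simp add: nxt_def x_def)
      have fin: "finite (Dseq n k)" using IH finite_subset by blast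
      show ?thesis using eq x IH fin by (auto simp: card_Diff_singleton)
    qed
qed

lemma Dseq_props: "(\<exists>r. goodcuts n r (Dseq n k)) \<and> Dseq n k \<subseteq> {1..<n} \<and> card (Dseq n k) = n - 1 - k
   \<and> (Dseq n k \<noteq> {} \<longrightarrow> (\<exists>x\<in>Dseq n k. Dseq n (Suc k) = Dseq n k - {x}))"
proof (induction k)
  case 0
  have base: "(\<exists>r. goodcuts n r (Dseq n 0)) \<and> Dseq n 0 \<subseteq> {1..<n} \<and> card (Dseq n 0) = n - 1 - 0"
    by (auto simp: Dseq_def goodcuts_def intro!: exI[of _ 0])
  show ?case using base Dseq_step[OF base] by simp
next
  case (Suc k)
  then have "(\<exists>r. goodcuts n r (Dseq n (Suc k))) \<and> Dseq n (Suc k) \<subseteq> {1..<n} \<and> card (Dseq n (Suc k)) = n - 1 - Suc k"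
    using Dseq_step[of n k] by blast
  then show ?case using Dseq_step[of n "Suc k"] by blast
qed


lemma funpow_in: "bij_betw \<phi> V V \<Longrightarrow> v \<in> V \<Longrightarrow> (\<phi> ^^ k) v \<in> V"
  by (induction k) (auto simp: bij_betw_apply)

lemma funpow_cancel: "bij_betw \<phi> V V \<Longrightarrow> a \<in> V \<Longrightarrow> b \<in> V \<Longrightarrow> (\<phi> ^^ k) a = (\<phi> ^^ k) b \<Longrightarrow> a = b"
proof (induction k)
  case (Suc k)
  then have "(\<phi> ^^ k) a = (\<phi> ^^ k) b"
    using funpow_in[OF Suc.prems(1)] bij_betw_imp_inj_on[OF Suc.prems(1)] by (auto dest: inj_onD)
  then show ?case using Suc by blast
qed simp

lemma funpow_edge:
  assumes "automorphism V E \<phi>" "u \<in> V" "v \<in> V"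
  shows "{(\<phi> ^^ k) u, (\<phi> ^^ k) v} \<in> E \<longleftrightarrow> {u, v} \<in> E"
proof (induction k)
  case (Suc k)
  have b: "bij_betw \<phi> V V" using assms(1) by (simp add: automorphism_def)
  have "{(\<phi> ^^ Suc k) u, (\<phi> ^^ Suc k) v} \<in> E \<longleftrightarrow> {(\<phi> ^^ k) u, (\<phi> ^^ k) v} \<in> E"
    using assms(1) funpow_in[OF b assms(2)] funpow_in[OF b assms(3)] unfolding automorphism_def by simp
  then show ?case using Suc by simp
qed simp

lemma cyclic_struct:
  assumes fin: "finite V" and v0: "v0 \<in> V" and b: "bij_betw \<phi> V V"
    and cov: "\<forall>w\<in>V. \<exists>j. (\<phi> ^^ j) v0 = w"
  shows "inj_on (\<lambda>j. (\<phi> ^^ j) v0) {..<card V} \<and> (\<lambda>j. (\<phi> ^^ j) v0) ` {..<card V} = V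
     \<and> (\<forall>k. (\<phi> ^^ k) v0 = (\<phi> ^^ (k mod card V)) v0)"
proof -
  define f where "f j = (\<phi> ^^ j) v0" for j
  have fV: "f j \<in> V" for j using funpow_in[OF b v0] by (simp add: f_def)
  have shift: "f (i + j) = (\<phi> ^^ i) (f j)" for i j by (simp add: f_def funpow_add)
  have "\<not> inj_on f {..card V}"
  proof
    assume "inj_on f {..card V}"
    then have "card (f ` {..card V}) = Suc (card V)" by (simp add: card_image)
    moreover have "card (f ` {..card V}) \<le> card V" using fV fin by (intro card_mono) auto
    ultimately show False by simp
  qed
  then obtain i j where ij: "i < j" "f i = f j"
    unfolding inj_on_def by (metis linorder_neqE_nat)
  have "f j = (\<phi> ^^ i) (f (j - i))" using shift[of i "j - i"] ij by simp
  moreover have "f i = (\<phi> ^^ i) v0" by (simp add: f_def)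
  ultimately have "f (j - i) = v0" using funpow_cancel[OF b fV v0] ij by metis
  then have exp: "\<exists>p. 0 < p \<and> f p = v0" using ij by (intro exI[of _ "j - i"]) simp
  define p where "p = (LEAST p. 0 < p \<and> f p = v0)"
  have p: "0 < p" "f p = v0" using LeastI_ex[OF exp] by (auto simp: p_def)
  have per: "f (a + p * m) = f a" for a m
  proof (induction m)
    case (Suc m)
    have "f (a + p * Suc m) = (\<phi> ^^ (a + p * m)) (f p)" using shift[of "a + p*m" p] by (simp add: algebra_simps)
    also have "\<dots> = f (a + p * m)" using p by (simp add: f_def)
    finally show ?case using Suc by simp
  qed simp
  have modp: "f k = f (k mod p)" for k using per[of "k mod p" "k div p"] by simp
  have inj: "inj_on f {..<p}"
  proof (rule inj_onI, rule ccontr)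
    fix a c assume ac: "a \<in> {..<p}" "c \<in> {..<p}" "f a = f c" "a \<noteq> c"
    have "\<exists>a c. a < c \<and> c < p \<and> f a = f c" using ac by (metis lessThan_iff linorder_neqE_nat)
    then obtain a c where ac: "a < c" "c < p" "f a = f c" by blast
    have "f c = (\<phi> ^^ a) (f (c - a))" using shift[of a "c - a"] ac by simp
    moreover have "f a = (\<phi> ^^ a) v0" by (simp add: f_def)
    ultimately have "f (c - a) = v0" using funpow_cancel[OF b fV v0] ac by metis
    moreover have "c - a < p" "0 < c - a" using ac by auto
    ultimately show False using not_less_Least[of "c - a" "\<lambda>p. 0 < p \<and> f p = v0"] by (simp add: p_def)
  qed
  have img: "f ` {..<p} = V"
  proof
    show "f ` {..<p} \<subseteq> V" using fV by auto
    show "V \<subseteq> f ` {..<p}"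
    proof
      fix w assume "w \<in> V"
      then obtain j where "f j = w" using cov by (auto simp: f_def)
      then show "w \<in> f ` {..<p}" using modp[of j] p(1) by (metis imageI lessThan_iff mod_less_divisor)
    qed
  qed
  have "card V = p" using card_image[OF inj] img by simp
  then show ?thesis using inj img modp unfolding f_def by simp
qed


theorem mainTheorem3:
  fixes V :: "'a set" and E :: "'a set set"
  assumes "simple_graph V E" and "circulant V E"
  shows "stww V E \<le> 3 * max_degree V E + 1"
proof -
  have fin: "finite V" using assms(1) by (simp add: simple_graph_def)
  obtain \<phi> where aut: "automorphism V E \<phi>" and cov: "\<forall>v\<in>V. \<forall>w\<in>V. \<exists>j::nat. (\<phi> ^^ j) v = w"
    using assms(2) by (auto simp: circulant_def)
  have b: "bij_betw \<phi> V V" using aut by (simp add: automorphism_def)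
  define n where "n = card V"
  show ?thesis
  proof (cases "V = {}")
    case True
    have cs: "contraction_sequence V (\<lambda>_. {})" using True by (simp add: contraction_sequence_def)
    have "cs_width V {} E (\<lambda>_. {}) = 0" using True by (simp add: cs_width_def)
    then have "tww V {} E \<le> 0" unfolding tww_def using cs by (metis (mono_tags, lifting) Least_le)
    then show ?thesis by (simp add: stww_def)
  next
    case False
    then obtain v0 where v0: "v0 \<in> V" by blast
    define f where "f j = (\<phi> ^^ j) v0" for j
    have npos: "n > 0" using False fin by (simp add: n_def card_gt_0_iff)
    have cst: "inj_on f {..<n}" "f ` {..<n} = V" "\<And>k. f k = f (k mod n)"
      using cyclic_struct[OF fin v0 b] cov v0 unfolding f_def n_def by blast+
    have fV: "f j \<in> V" for j using funpow_in[OF b v0] by (simp add: f_def)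
    have shift: "(\<phi> ^^ k) (f j) = f (k + j)" for k j by (simp add: f_def funpow_add)
    define S where "S = {d. d < n \<and> {f 0, f d} \<in> E}"
    have Sn: "S \<subseteq> {..<n}" by (auto simp: S_def)
    have edge: "(j + n - i) mod n \<in> S" if ij: "i < n" "j < n" "{f i, f j} \<in> E" for i j
    proof -
      have "{(\<phi> ^^ (n - i)) (f i), (\<phi> ^^ (n - i)) (f j)} \<in> E"
        using funpow_edge[OF aut fV fV] ij by blast
      moreover have "(\<phi> ^^ (n - i)) (f i) = f 0" using shift[of "n - i" i] cst(3)[of n] ij by simp
      moreover have "(\<phi> ^^ (n - i)) (f j) = f ((j + n - i) mod n)"
        using shift[of "n - i" j] cst(3)[of "n - i + j"] ij by (simp add: add.commute)
      ultimately show ?thesis using npos by (simp add: S_def)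
    qed
    have cardS: "card S \<le> max_degree V E"
    proof -
      have "{w \<in> V. {f 0, w} \<in> E} = f ` S"
      proof
        show "{w \<in> V. {f 0, w} \<in> E} \<subseteq> f ` S"
        proof
          fix w assume w: "w \<in> {w \<in> V. {f 0, w} \<in> E}"
          then obtain d where "d < n" "w = f d" using cst(2) by (metis (no_types, lifting) imageE lessThan_iff mem_Collect_eq)
          then show "w \<in> f ` S" using w by (auto simp: S_def)
        qed
        show "f ` S \<subseteq> {w \<in> V. {f 0, w} \<in> E}" using fV by (auto simp: S_def)
      qed
      then have "degree V E (f 0) = card S"
        unfolding degree_def using card_image[OF inj_on_subset[OF cst(1) Sn]] by simp
      moreover have "degree V E (f 0) \<le> max_degree V E"
        unfolding max_degree_def using fin fV[of 0] by (intro Max_ge) auto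
      ultimately show ?thesis by simp
    qed
    define P where "P i = (`) f ` parts n (Dseq n (n - i))" for i
    have injP: "inj_on ((`) f) (Pow {..<n})" using cst(1) by (rule inj_on_image_Pow)
    have partsPow: "parts n C \<subseteq> Pow {..<n}" for C using cls_sub unfolding parts_def by blast
    have cs: "contraction_sequence V P"
      unfolding contraction_sequence_def
    proof (intro conjI allI impI)
      have "parts n (Dseq n 0) = (\<lambda>x. {x}) ` {..<n}"
        unfolding parts_def Dseq_def using cls_full by (auto simp: image_def)
      then show "P (card V) = (\<lambda>v. {v}) ` V" unfolding P_def n_def[symmetric]
        using cst(2) by (auto simp: image_image)
    next
      fix i assume i: "1 \<le> i \<and> i < card V"
      define k where "k = n - Suc i"
      have k: "n - i = Suc k" "n - Suc i = k" using i by (auto simp: k_def n_def)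
      have pr: "Dseq n k \<subseteq> {1..<n}" "card (Dseq n k) = n - 1 - k"
        "Dseq n k \<noteq> {} \<longrightarrow> (\<exists>x\<in>Dseq n k. Dseq n (Suc k) = Dseq n k - {x})"
        using Dseq_props[of n k] by blast+
      have "Dseq n k \<noteq> {}" using pr(2) i k by (auto simp: n_def)
      then obtain c where c: "c \<in> Dseq n k" "Dseq n (Suc k) = Dseq n k - {c}" using pr(3) by blast
      let ?X = "cls n (Dseq n k) (c - 1)" and ?Y = "cls n (Dseq n k) c"
      have m: "?X \<in> parts n (Dseq n k)" "?Y \<in> parts n (Dseq n k)" "?X \<noteq> ?Y"
        "parts n (Dseq n k - {c}) = (parts n (Dseq n k) - {?X, ?Y}) \<union> {?X \<union> ?Y}"
        using merge[OF c(1) pr(1)] by blast+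
      have XYp: "?X \<in> Pow {..<n}" "?Y \<in> Pow {..<n}" using cls_sub by simp_all
      have "P i = (`) f ` ((parts n (Dseq n k) - {?X, ?Y}) \<union> {?X \<union> ?Y})"
        unfolding P_def k c(2) m(4) by simp
      also have "\<dots> = ((`) f ` parts n (Dseq n k) - {f ` ?X, f ` ?Y}) \<union> {f ` ?X \<union> f ` ?Y}"
      proof -
        have "(`) f ` (parts n (Dseq n k) - {?X, ?Y}) = (`) f ` parts n (Dseq n k) - (`) f ` {?X, ?Y}"
          by (rule inj_on_image_set_diff[OF injP]) (use partsPow XYp in auto)
        then show ?thesis by (simp add: image_Un)
      qed
      finally have Pi: "P i = (P (Suc i) - {f ` ?X, f ` ?Y}) \<union> {f ` ?X \<union> f ` ?Y}"
        unfolding P_def k by simp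
      have ne: "f ` ?X \<noteq> f ` ?Y" using m(3) inj_onD[OF injP _ XYp] by metis
      have inX: "f ` ?X \<in> P (Suc i)" and inY: "f ` ?Y \<in> P (Suc i)" using m(1,2) unfolding P_def k by simp_all
      show "\<exists>X\<in>P (Suc i). \<exists>Y\<in>P (Suc i). X \<noteq> Y \<and> P i = P (Suc i) - {X, Y} \<union> {X \<union> Y}"
      proof (rule bexI[where x="f ` ?X"], rule bexI[where x="f ` ?Y"])
        show "f ` ?X \<noteq> f ` ?Y \<and> P i = P (Suc i) - {f ` ?X, f ` ?Y} \<union> {f ` ?X \<union> f ` ?Y}"
          by (rule conjI[OF ne Pi])
      qed (rule inY, rule inX)
    qed
    have wd: "max_quot_red_degree {} E (P i) \<le> 3 * max_degree V E + 1" for i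
    proof -
      define C where "C = Dseq n (n - i)"
      obtain r where g: "goodcuts n r C" and Cs: "C \<subseteq> {1..<n}" using Dseq_props[of n "n - i"] unfolding C_def by blast
      have "quot_red_degree {} E (P i) U \<le> 3 * max_degree V E + 1" if U: "U \<in> P i" for U
      proof -
        obtain x0 where x0: "x0 < n" "U = f ` cls n C x0" using U unfolding P_def C_def parts_def by auto
        have "{W \<in> P i. W \<noteq> U \<and> quot_red {} E U W} \<subseteq>
            (`) f ` {B \<in> parts n C. \<exists>x\<in>cls n C x0. \<exists>y\<in>B. (y + n - x) mod n \<in> S}"
        proof
          fix W assume W: "W \<in> {W \<in> P i. W \<noteq> U \<and> quot_red {} E U W}"
          then obtain B where B: "B \<in> parts n C" "W = f ` B" unfolding P_def C_def by auto
          from W have "\<not> quot_nonadj {} E U W" by (simp add: quot_red_def)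
          then obtain u w where uw: "u \<in> U" "w \<in> W" "{u, w} \<in> E" unfolding quot_nonadj_def by blast
          then obtain x y where xy: "x \<in> cls n C x0" "y \<in> B" "u = f x" "w = f y" using x0 B by blast
          have "x < n" "y < n" using xy B cls_sub partsPow by blast+
          then have "(y + n - x) mod n \<in> S" using edge uw xy by blast
          then show "W \<in> (`) f ` {B \<in> parts n C. \<exists>x\<in>cls n C x0. \<exists>y\<in>B. (y + n - x) mod n \<in> S}"
            using B xy by blast
        qed
        then have "quot_red_degree {} E (P i) U \<le> card ((`) f ` {B \<in> parts n C. \<exists>x\<in>cls n C x0. \<exists>y\<in>B. (y + n - x) mod n \<in> S})"
          unfolding quot_red_degree_def using finite_parts by (intro card_mono) auto
        also have "\<dots> \<le> card {B \<in> parts n C. \<exists>x\<in>cls n C x0. \<exists>y\<in>B. (y + n - x) mod n \<in> S}"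
          by (rule card_image_le) (simp add: finite_parts)
        also have "\<dots> \<le> 3 * card S + 1" by (rule idx_bound[OF npos g Cs Sn x0(1)])
        finally show ?thesis using cardS by simp
      qed
      moreover have "finite (P i)" unfolding P_def using finite_parts by simp
      ultimately show ?thesis unfolding max_quot_red_degree_def by (intro Max.boundedI) auto
    qed
    have "cs_width V {} E P \<le> 3 * max_degree V E + 1"
      unfolding cs_width_def using wd by (intro Max.boundedI) auto
    moreover have "tww V {} E \<le> cs_width V {} E P"
      unfolding tww_def using cs by (metis (mono_tags, lifting) Least_le)
    ultimately show ?thesis by (simp add: stww_def)
  qed
qed

end
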